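(* Let $\Sigma=\{\sigma_{\mathbf{a}|\mathbf{x}}\}$ be a no-signaling assemblage (with $n$ untrusted parties, outcome numbers $\mathcal{A}_i$, setting numbers $\mathcal{X}_i$, acting on $\mathbb{C}^d$). For each index $\mathbf{a}|\mathbf{x}$ let $R_{\mathbf{a}|\mathbf{x}}$ be the orthogonal projection onto $\mathrm{Im}(\sigma_{\mathbf{a}|\mathbf{x}})$, and let $\mathcal{L}$ be the set of all local deterministic boxes. Then $\Sigma$ is on the edge of the set of no-signaling assemblages if and only if $$\det\Big(\prod_{L\in\mathcal{L}}\Big(\prod_{\mathbf{a}|\mathbf{x}\in I_L}R_{\mathbf{a}|\mathbf{x}}-\mathbb{1}\Big)\Big)\neq 0,$$ where the (operator) products are taken in any fixed order.
   Context: Fix $n\ge 1$, integers $\mathcal{A}_i,\mathcal{X}_i\ge 1$ ($i=1,\dots,n$) and $d\ge1$. Write $\mathbf{a}|\mathbf{x}=a_1\dots a_n|x_1\dots x_n$ with $a_i\in\{0,\dots,\mathcal{A}_i-1\}$, $x_i\in\{0,\dots,\mathcal{X}_i-1\}$. A no-signaling assemblage is a collection $\Sigma=\{\sigma_{\mathbf{a}|\mathbf{x}}\}$ of positive semidefinite operators on $\mathbb{C}^d$ such that $\sum_{\mathbf{a}}\sigma_{\mathbf{a}|\mathbf{x}}=\rho_B$ for all $\mathbf{x}$, where $\rho_B$ is a fixed density operator (trace one), and for every subset $I=\{i_1,\dots,i_s\}\subset\{1,\dots,n\}$ with $1\le s<n$ the marginal $\sum_{a_j:\,j\notin I}\sigma_{\mathbf{a}|\mathbf{x}}$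 depends only on $a_{i_1},\dots,a_{i_s},x_{i_1},\dots,x_{i_s}$ (not on $x_j$, $j\notin I$). A local deterministic box $L$ is given by functions $f_i:\{0,\dots,\mathcal{X}_i-1\}\to\{0,\dots,\mathcal{A}_i-1\}$, with $p_L(\mathbf{a}|\mathbf{x})=\prod_i\delta_{a_i,f_i(x_i)}$; set $I_L=\{\mathbf{a}|\mathbf{x}: p_L(\mathbf{a}|\mathbf{x})\neq 0\}$. An assemblage admits an LHS model if $\sigma_{\mathbf{a}|\mathbf{x}}=\sum_j q_j\prod_{i=1}^n p^{(A_i)}_j(a_i|x_i)\rho_j$ with $q_j\ge0$, $\sum_j q_j=1$, density operators $\rho_j$ on $\mathbb{C}^d$ and conditional probability distributions $p^{(A_i)}_j(\cdot|x_i)$. A no-signaling assemblage $\Sigma$ is on the edge of the set of no-signaling assemblages if whenever $\Sigma=\epsilon\Sigma_1+(1-\epsilon)\Sigma_2$ with $\epsilon\in[0,1]$, $\Sigma_1$ an LHS assemblage and $\Sigma_2$ a no-signaling assemblage (same scenario), necessarily $\epsilon=0$. *)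

theory Defs
  imports "Jordan_Normal_Form.Schur_Decomposition"
begin

definition psd :: "nat \<Rightarrow> complex mat \<Rightarrow> bool" where
  "psd d M \<longleftrightarrow> M \<in> carrier_mat d d \<and> mat_adjoint M = M \<and>
     (\<forall>v \<in> carrier_vec d. 0 \<le> Re (\<Sum>i<d. \<Sum>j<d. cnj (v $ i) * M $$ (i, j) * v $ j))"

definition density :: "nat \<Rightarrow> complex mat \<Rightarrow> bool" where
  "density d M \<longleftrightarrow> psd d M \<and> (\<Sum>i<d. M $$ (i, i)) = 1"

definition msum :: "nat \<Rightarrow> 'i set \<Rightarrow> ('i \<Rightarrow> complex mat) \<Rightarrow> complex mat" where
  "msum d S f = mat d d (\<lambda>(r, c). \<Sum>k\<in>S. f k $$ (r, c))"

definition mprod :: "nat \<Rightarrow> complex mat list \<Rightarrow> complex mat" where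
  "mprod d Ms = foldr (\<lambda>M P. M * P) Ms (1\<^sub>m d)"

definition mat_image :: "complex mat \<Rightarrow> complex vec set" where
  "mat_image M = {M *\<^sub>v w | w. w \<in> carrier_vec (dim_col M)}"

definition is_orth_proj_onto :: "nat \<Rightarrow> complex mat \<Rightarrow> complex vec set \<Rightarrow> bool" where
  "is_orth_proj_onto d P S \<longleftrightarrow> P \<in> carrier_mat d d \<and> P * P = P \<and> mat_adjoint P = P \<and>
     mat_image P = S"

(* Index tuples: a = a_1..a_n as lists of length n with a!i < B i (0-based parties) *)
definition tuples :: "nat \<Rightarrow> (nat \<Rightarrow> nat) \<Rightarrow> nat list set" where
  "tuples n B = {a. length a = n \<and> (\<forall>i<n. a ! i < B i)}"

definition agree_on :: "nat set \<Rightarrow> nat list \<Rightarrow> nat list \<Rightarrow> bool" where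
  "agree_on I a b \<longleftrightarrow> (\<forall>i\<in>I. a ! i = b ! i)"

definition no_signaling ::
  "nat \<Rightarrow> (nat \<Rightarrow> nat) \<Rightarrow> (nat \<Rightarrow> nat) \<Rightarrow> nat \<Rightarrow> (nat list \<Rightarrow> nat list \<Rightarrow> complex mat) \<Rightarrow> bool" where
  "no_signaling n A X d \<sigma> \<longleftrightarrow>
     (\<forall>a\<in>tuples n A. \<forall>x\<in>tuples n X. psd d (\<sigma> a x)) \<and>
     (\<exists>\<rho>. density d \<rho> \<and> (\<forall>x\<in>tuples n X. msum d (tuples n A) (\<lambda>a. \<sigma> a x) = \<rho>)) \<and>
     (\<forall>I. I \<subseteq> {..<n} \<and> 1 \<le> card I \<and> card I < n \<longrightarrow>
        (\<forall>a\<in>tuples n A. \<forall>x\<in>tuples n X. \<forall>x'\<in>tuples n X. agree_on I x x' \<longrightarrow>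
           msum d {a'\<in>tuples n A. agree_on I a' a} (\<lambda>a'. \<sigma> a' x) =
           msum d {a'\<in>tuples n A. agree_on I a' a} (\<lambda>a'. \<sigma> a' x')))"

(* LHS model with finitely many hidden states j < m;
   p j i a x = p_j^{(A_i)}(a | x) *)
definition has_LHS ::
  "nat \<Rightarrow> (nat \<Rightarrow> nat) \<Rightarrow> (nat \<Rightarrow> nat) \<Rightarrow> nat \<Rightarrow> (nat list \<Rightarrow> nat list \<Rightarrow> complex mat) \<Rightarrow> bool" where
  "has_LHS n A X d \<sigma> \<longleftrightarrow>
     (\<exists>m (q :: nat \<Rightarrow> real) (p :: nat \<Rightarrow> nat \<Rightarrow> nat \<Rightarrow> nat \<Rightarrow> real) (\<rho> :: nat \<Rightarrow> complex mat).
        (\<forall>j<m. 0 \<le> q j) \<and> (\<Sum>j<m. q j) = 1 \<and>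
        (\<forall>j<m. density d (\<rho> j)) \<and>
        (\<forall>j<m. \<forall>i<n. \<forall>x<X i. (\<forall>a<A i. 0 \<le> p j i a x) \<and> (\<Sum>a<A i. p j i a x) = 1) \<and>
        (\<forall>a\<in>tuples n A. \<forall>x\<in>tuples n X.
           \<sigma> a x = msum d {..<m}
             (\<lambda>j. complex_of_real (q j * (\<Prod>i<n. p j i (a ! i) (x ! i))) \<cdot>\<^sub>m \<rho> j)))"

definition on_edge ::
  "nat \<Rightarrow> (nat \<Rightarrow> nat) \<Rightarrow> (nat \<Rightarrow> nat) \<Rightarrow> nat \<Rightarrow> (nat list \<Rightarrow> nat list \<Rightarrow> complex mat) \<Rightarrow> bool" where
  "on_edge n A X d \<sigma> \<longleftrightarrow>
     (\<forall>(\<epsilon>::real) \<sigma>1 \<sigma>2. 0 \<le> \<epsilon> \<and> \<epsilon> \<le> 1 \<and> has_LHS n A X d \<sigma>1 \<and> no_signaling n A X d \<sigma>2 \<and>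
        (\<forall>a\<in>tuples n A. \<forall>x\<in>tuples n X.
           \<sigma> a x = complex_of_real \<epsilon> \<cdot>\<^sub>m \<sigma>1 a x + complex_of_real (1 - \<epsilon>) \<cdot>\<^sub>m \<sigma>2 a x)
        \<longrightarrow> \<epsilon> = 0)"

(* Local deterministic boxes: L ! i is the list of values f_i(0),...,f_i(X_i - 1) *)
definition local_boxes :: "nat \<Rightarrow> (nat \<Rightarrow> nat) \<Rightarrow> (nat \<Rightarrow> nat) \<Rightarrow> nat list list set" where
  "local_boxes n A X = {L. length L = n \<and> (\<forall>i<n. length (L ! i) = X i \<and> (\<forall>x<X i. L ! i ! x < A i))}"

(* I_L: indices a|x with p_L(a|x) \<noteq> 0 *)
definition I_L :: "nat \<Rightarrow> (nat \<Rightarrow> nat) \<Rightarrow> (nat \<Rightarrow> nat) \<Rightarrow> nat list list \<Rightarrow> (nat list \<times> nat list) set" where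
  "I_L n A X L = {(a, x). a \<in> tuples n A \<and> x \<in> tuples n X \<and> (\<forall>i<n. a ! i = L ! i ! (x ! i))}"

end

theory Submission
  imports Defs
begin
definition ip :: "nat \<Rightarrow> complex vec \<Rightarrow> complex vec \<Rightarrow> complex" where
  "ip d u v = (\<Sum>i<d. cnj (u $ i) * v $ i)"
definition herm :: "nat \<Rightarrow> complex mat \<Rightarrow> bool" where
  "herm d M \<longleftrightarrow> (\<forall>i<d. \<forall>j<d. M $$ (i, j) = cnj (M $$ (j, i)))"

lemma adjoint_index:
  assumes "i < dim_col M" "j < dim_row M"
  shows "mat_adjoint M $$ (i, j) = cnj (M $$ (j, i))"
  using assms unfolding mat_adjoint_def mat_of_rows_def by simp

lemma adjoint_dims: "dim_row (mat_adjoint M) = dim_col M" "dim_col (mat_adjoint M) = dim_row M"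
  unfolding mat_adjoint_def mat_of_rows_def by simp_all

lemma mv_index:
  assumes "M \<in> carrier_mat d d" "v \<in> carrier_vec d" "i < d"
  shows "(M *\<^sub>v v) $ i = (\<Sum>j<d. M $$ (i, j) * v $ j)"
  using assms by (simp add: scalar_prod_def atLeast0LessThan)

lemma ip_herm:
  assumes "M \<in> carrier_mat d d" "herm d M" "u \<in> carrier_vec d" "v \<in> carrier_vec d"
  shows "ip d u (M *\<^sub>v v) = ip d (M *\<^sub>v u) v"
proof -
  have "ip d u (M *\<^sub>v v) = (\<Sum>i<d. \<Sum>j<d. cnj (u $ i) * M $$ (i, j) * v $ j)"
    unfolding ip_def using assms by (auto simp: scalar_prod_def atLeast0LessThan sum_distrib_left mult.assoc intro!: sum.cong)
  also have "\<dots> = (\<Sum>j<d. \<Sum>i<d. cnj (u $ i) * M $$ (i, j) * v $ j)"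
    by (rule sum.swap)
  also have "\<dots> = ip d (M *\<^sub>v u) v"
  proof -
    have h: "cnj (M $$ (j, i)) = M $$ (i, j)" if "i < d" "j < d" for i j
      using assms(2) that unfolding herm_def by (metis complex_cnj_cnj)
    show ?thesis
      unfolding ip_def using assms
      by (auto simp: scalar_prod_def atLeast0LessThan sum_distrib_right h intro!: sum.cong)
  qed
  finally show ?thesis .
qed

lemma ip_conj: "cnj (ip d u v) = ip d v u"
  unfolding ip_def by (simp add: mult.commute)

lemma ip_add2: "u \<in> carrier_vec d \<Longrightarrow> v \<in> carrier_vec d \<Longrightarrow> w \<in> carrier_vec d \<Longrightarrow>
   ip d u (v + w) = ip d u v + ip d u w"
  unfolding ip_def by (simp add: distrib_left sum.distrib)

lemma ip_minus2: "u \<in> carrier_vec d \<Longrightarrow> v \<in> carrier_vec d \<Longrightarrow> w \<in> carrier_vec d \<Longrightarrow>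
   ip d u (v - w) = ip d u v - ip d u w"
  unfolding ip_def by (simp add: right_diff_distrib sum_subtractf)

lemma ip_add1: "u \<in> carrier_vec d \<Longrightarrow> v \<in> carrier_vec d \<Longrightarrow> w \<in> carrier_vec d \<Longrightarrow>
   ip d (v + w) u = ip d v u + ip d w u"
  unfolding ip_def by (simp add: distrib_right sum.distrib)

lemma ip_minus1: "u \<in> carrier_vec d \<Longrightarrow> v \<in> carrier_vec d \<Longrightarrow> w \<in> carrier_vec d \<Longrightarrow>
   ip d (v - w) u = ip d v u - ip d w u"
  unfolding ip_def by (simp add: left_diff_distrib sum_subtractf)

lemma ip_smult2: "v \<in> carrier_vec d \<Longrightarrow> ip d u (c \<cdot>\<^sub>v v) = c * ip d u v"
  unfolding ip_def by (simp add: sum_distrib_left ac_simps)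

lemma ip_smult1: "v \<in> carrier_vec d \<Longrightarrow> ip d (c \<cdot>\<^sub>v v) u = cnj c * ip d v u"
  unfolding ip_def by (simp add: sum_distrib_left ac_simps)

lemma ip_self: "ip d v v = of_real (\<Sum>i<d. (cmod (v $ i))^2)"
  unfolding ip_def of_real_sum by (intro sum.cong refl) (metis complex_norm_square mult.commute)

lemma ip_self_nonneg: "0 \<le> Re (ip d v v)"
  unfolding ip_self by (simp add: sum_nonneg)

lemma ip_self_zero:
  assumes "v \<in> carrier_vec d" "Re (ip d v v) \<le> 0"
  shows "v = 0\<^sub>v d"
proof -
  have "(\<Sum>i<d. (cmod (v $ i))^2) = 0"
    using assms(2) ip_self_nonneg[of d v] unfolding ip_self by simp
  hence "\<forall>i\<in>{..<d}. (cmod (v $ i))^2 = 0"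
    by (subst sum_nonneg_eq_0_iff[symmetric]) auto
  thus ?thesis using assms(1) by (intro eq_vecI) auto
qed

lemma ip_self_real: "ip d v v = complex_of_real (Re (ip d v v))"
  unfolding ip_self by simp

lemma adjoint_herm:
  assumes "M \<in> carrier_mat d d"
  shows "mat_adjoint M = M \<longleftrightarrow> herm d M"
proof
  assume h: "mat_adjoint M = M"
  show "herm d M" unfolding herm_def
  proof (intro allI impI)
    fix i j assume ij: "i < d" "j < d"
    have "M $$ (i,j) = mat_adjoint M $$ (i,j)" using h by simp
    also have "\<dots> = cnj (M $$ (j,i))" using assms ij adjoint_index by auto
    finally show "M $$ (i,j) = cnj (M $$ (j,i))" .
  qed
next
  assume h: "herm d M"
  show "mat_adjoint M = M"
  proof (rule eq_matI)
    fix i j assume ij: "i < dim_row M" "j < dim_col M"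
    hence "i < d" "j < d" using assms by auto
    hence "M $$ (i, j) = cnj (M $$ (j, i))" using h unfolding herm_def by blast
    thus "mat_adjoint M $$ (i, j) = M $$ (i, j)" using adjoint_index assms ij by auto
  qed (use assms adjoint_dims in auto)
qed

lemma psd_iff:
  "psd d M \<longleftrightarrow> M \<in> carrier_mat d d \<and> herm d M \<and> (\<forall>v\<in>carrier_vec d. 0 \<le> Re (ip d v (M *\<^sub>v v)))"
proof -
  have *: "(\<Sum>i<d. \<Sum>j<d. cnj (v $ i) * M $$ (i, j) * v $ j) = ip d v (M *\<^sub>v v)"
    if "M \<in> carrier_mat d d" "v \<in> carrier_vec d" for v
    using that unfolding ip_def
    by (auto simp: scalar_prod_def atLeast0LessThan sum_distrib_left mult.assoc intro!: sum.cong)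
  show ?thesis unfolding psd_def
    using adjoint_herm * by (metis (no_types, lifting))
qed

definition psdf :: "nat \<Rightarrow> complex mat \<Rightarrow> bool" where
  "psdf d M \<longleftrightarrow> (\<forall>v\<in>carrier_vec d. 0 \<le> Re (ip d v (M *\<^sub>v v)))"

lemma real_cs_aux:
  fixes a b k :: real
  assumes "\<And>s. 0 \<le> a - 2 * s * k + s^2 * k * b" "k \<ge> 0" "b \<ge> 0"
  shows "k \<le> a * b"
proof (cases "b = 0")
  case True
  show ?thesis
  proof (rule ccontr)
    assume "\<not> k \<le> a * b"
    hence k: "k > 0" using True by simp
    have "0 \<le> a - 2 * ((a + 1) / (2 * k)) * k" using assms(1)[of "(a+1)/(2*k)"] True by simp
    also have "\<dots> = -1" using k by (simp add: field_simps)
    finally show False by simp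
  qed
next
  case False
  hence b: "b > 0" using assms by simp
  have "0 \<le> a - 2 * (1/b) * k + (1/b)^2 * k * b" using assms(1) .
  also have "\<dots> = a - k / b" using b by (simp add: field_simps power2_eq_square)
  finally have "k / b \<le> a" by simp
  thus ?thesis using b by (simp add: field_simps mult.commute)
qed

lemma cs:
  assumes M: "M \<in> carrier_mat d d" "herm d M" "psdf d M"
    and u: "u \<in> carrier_vec d" and v: "v \<in> carrier_vec d"
  shows "(cmod (ip d u (M *\<^sub>v v)))^2 \<le> Re (ip d u (M *\<^sub>v u)) * Re (ip d v (M *\<^sub>v v))"
proof -
  define c where "c = ip d u (M *\<^sub>v v)"
  define a where "a = Re (ip d u (M *\<^sub>v u))"
  define b where "b = Re (ip d v (M *\<^sub>v v))"
  have Mu: "M *\<^sub>v u \<in> carrier_vec d" and Mv: "M *\<^sub>v v \<in> carrier_vec d" using M u v by auto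
  have vu: "ip d v (M *\<^sub>v u) = cnj c"
    unfolding c_def using ip_herm[OF M(1,2) v u] ip_conj by metis
  have key: "0 \<le> a - 2 * s * (cmod c)^2 + s^2 * (cmod c)^2 * b" for s :: real
  proof -
    define t where "t = - complex_of_real s * cnj c"
    define w where "w = u + t \<cdot>\<^sub>v v"
    have w: "w \<in> carrier_vec d" unfolding w_def using u v by auto
    have Mw: "M *\<^sub>v w = M *\<^sub>v u + t \<cdot>\<^sub>v (M *\<^sub>v v)"
      unfolding w_def using M u v by (simp add: mult_add_distrib_mat_vec mult_mat_vec)
    have "ip d w (M *\<^sub>v w) = ip d u (M *\<^sub>v u) + t * c + cnj t * cnj c + cnj t * t * ip d v (M *\<^sub>v v)"
      unfolding Mw unfolding w_def using u v Mu Mv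
      by (simp add: ip_add1 ip_add2 ip_smult1 ip_smult2 vu c_def algebra_simps)
    hence "Re (ip d w (M *\<^sub>v w)) = a + 2 * Re (t * c) + Re (cnj t * t) * b"
      unfolding a_def b_def
      by (simp add: ip_self_real[symmetric] algebra_simps) 
    also have "\<dots> = a - 2 * s * (cmod c)^2 + s^2 * (cmod c)^2 * b"
    proof -
      have cc: "cmod c * cmod c = Re c * Re c + Im c * Im c" using cmod_power2[of c] by (simp add: power2_eq_square)
      show ?thesis unfolding t_def by (simp add: power2_eq_square algebra_simps cc)
    qed
    finally show ?thesis using M(3) w unfolding psdf_def by metis
  qed
  have "(cmod c)^2 \<le> a * b"
    by (rule real_cs_aux[OF key]) (use M(3) v in \<open>auto simp: b_def psdf_def\<close>)
  thus ?thesis unfolding a_def b_def c_def .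
qed

lemma ker_lemma:
  assumes M: "M \<in> carrier_mat d d" "herm d M" "psdf d M"
    and v: "v \<in> carrier_vec d" and z: "Re (ip d v (M *\<^sub>v v)) \<le> 0"
  shows "M *\<^sub>v v = 0\<^sub>v d"
proof -
  have Mv: "M *\<^sub>v v \<in> carrier_vec d" using M v by auto
  have "(cmod (ip d (M *\<^sub>v v) (M *\<^sub>v v)))^2 \<le> Re (ip d (M *\<^sub>v v) (M *\<^sub>v (M *\<^sub>v v))) * Re (ip d v (M *\<^sub>v v))"
    by (rule cs[OF M Mv v])
  also have "\<dots> \<le> 0"
    using M(3) Mv z unfolding psdf_def by (simp add: mult_nonneg_nonpos)
  finally have "ip d (M *\<^sub>v v) (M *\<^sub>v v) = 0" by simp
  hence "Re (ip d (M *\<^sub>v v) (M *\<^sub>v v)) \<le> 0" by simp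
  thus ?thesis using ip_self_zero Mv by blast
qed

definition proj :: "nat \<Rightarrow> complex mat \<Rightarrow> bool" where
  "proj d R \<longleftrightarrow> R \<in> carrier_mat d d \<and> R * R = R \<and> herm d R"

lemma proj_idem_vec:
  assumes "proj d R" "w \<in> carrier_vec d"
  shows "R *\<^sub>v (R *\<^sub>v w) = R *\<^sub>v w"
proof -
  have c: "R \<in> carrier_mat d d" "R * R = R" using assms(1) unfolding proj_def by auto
  have "R *\<^sub>v (R *\<^sub>v w) = (R * R) *\<^sub>v w" by (simp only: assoc_mult_mat_vec[OF c(1) c(1) assms(2)])
  thus ?thesis using c(2) by simp
qed

lemma proj_norm:
  assumes P: "proj d R" and w: "w \<in> carrier_vec d"
  shows "Re (ip d (R *\<^sub>v w) (R *\<^sub>v w)) + Re (ip d (w - R *\<^sub>v w) (w - R *\<^sub>v w)) = Re (ip d w w)"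
proof -
  have R: "R \<in> carrier_mat d d" "herm d R" using P unfolding proj_def by auto
  have Rw: "R *\<^sub>v w \<in> carrier_vec d" using R w by auto
  have 1: "ip d (R *\<^sub>v w) (R *\<^sub>v w) = ip d w (R *\<^sub>v w)"
    using ip_herm[OF R w Rw] proj_idem_vec[OF P w] by simp
  have 2: "ip d (R *\<^sub>v w) w = ip d (R *\<^sub>v w) (R *\<^sub>v w)"
    using 1 ip_conj by metis
  have "ip d (w - R *\<^sub>v w) (w - R *\<^sub>v w) = ip d w w - ip d w (R *\<^sub>v w) - ip d (R *\<^sub>v w) w + ip d (R *\<^sub>v w) (R *\<^sub>v w)"
    using w Rw by (simp add: ip_minus1 ip_minus2)
  also have "\<dots> = ip d w w - ip d (R *\<^sub>v w) (R *\<^sub>v w)" using 1 2 by simp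
  finally show ?thesis by simp
qed

lemma mprod_Cons: "mprod d (M # Ms) = M * mprod d Ms"
  unfolding mprod_def by simp

lemma mprod_Nil: "mprod d [] = 1\<^sub>m d"
  unfolding mprod_def by simp

lemma mprod_carrier: "(\<And>M. M \<in> set Ms \<Longrightarrow> M \<in> carrier_mat d d) \<Longrightarrow> mprod d Ms \<in> carrier_mat d d"
  by (induction Ms) (auto simp: mprod_Cons mprod_Nil intro!: mult_carrier_mat)

lemma mprod_det: "(\<And>M. M \<in> set Ms \<Longrightarrow> M \<in> carrier_mat d d) \<Longrightarrow> det (mprod d Ms) = prod_list (map det Ms)"
proof (induction Ms)
  case Nil thus ?case by (simp add: mprod_Nil)
next
  case (Cons M Ms)
  have "det (mprod d (M # Ms)) = det M * det (mprod d Ms)"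
    unfolding mprod_Cons using Cons.prems mprod_carrier[of Ms d] by (intro det_mult) auto
  thus ?case using Cons by simp
qed

lemma mprod_vec_Cons:
  assumes "M \<in> carrier_mat d d" "\<And>M. M \<in> set Ms \<Longrightarrow> M \<in> carrier_mat d d" "w \<in> carrier_vec d"
  shows "mprod d (M # Ms) *\<^sub>v w = M *\<^sub>v (mprod d Ms *\<^sub>v w)"
  unfolding mprod_Cons using assms mprod_carrier[of Ms d] by simp

lemma mprod_fixes:
  assumes "\<And>M. M \<in> set Ms \<Longrightarrow> M \<in> carrier_mat d d" "w \<in> carrier_vec d" "\<forall>M\<in>set Ms. M *\<^sub>v w = w"
  shows "mprod d Ms *\<^sub>v w = w"
  using assms
proof (induction Ms)
  case Nil thus ?case by (simp add: mprod_Nil)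
next
  case (Cons M Ms)
  have "mprod d (M # Ms) *\<^sub>v w = M *\<^sub>v (mprod d Ms *\<^sub>v w)"
    using Cons.prems by (intro mprod_vec_Cons) auto
  also have "mprod d Ms *\<^sub>v w = w" using Cons by simp
  finally show ?case using Cons.prems by simp
qed

lemma proj_carrier: "proj d R \<Longrightarrow> R \<in> carrier_mat d d"
  unfolding proj_def by simp

lemma proj_step:
  assumes P: "proj d R" and u: "u \<in> carrier_vec d"
  shows "Re (ip d (R *\<^sub>v u) (R *\<^sub>v u)) \<le> Re (ip d u u)"
    and "Re (ip d u u) \<le> Re (ip d (R *\<^sub>v u) (R *\<^sub>v u)) \<Longrightarrow> R *\<^sub>v u = u"
proof -
  note e = proj_norm[OF P u]
  show "Re (ip d (R *\<^sub>v u) (R *\<^sub>v u)) \<le> Re (ip d u u)"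
    using e ip_self_nonneg[of d "u - R *\<^sub>v u"] by linarith
  assume "Re (ip d u u) \<le> Re (ip d (R *\<^sub>v u) (R *\<^sub>v u))"
  hence "Re (ip d (u - R *\<^sub>v u) (u - R *\<^sub>v u)) \<le> 0" using e by linarith
  moreover have "u - R *\<^sub>v u \<in> carrier_vec d" using u proj_carrier[OF P] by auto
  ultimately have z: "u - R *\<^sub>v u = 0\<^sub>v d" using ip_self_zero by blast
  have Ru: "R *\<^sub>v u \<in> carrier_vec d" using u proj_carrier[OF P] by auto
  show "R *\<^sub>v u = u"
  proof (rule eq_vecI)
    fix i assume "i < dim_vec u"
    hence i: "i < d" using u by simp
    have "(u - R *\<^sub>v u) $ i = 0" using z i by simp
    moreover have "(u - R *\<^sub>v u) $ i = u $ i - (R *\<^sub>v u) $ i"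
      using proj_carrier[OF P] i by (intro index_minus_vec(1)) auto
    ultimately show "(R *\<^sub>v u) $ i = u $ i" by simp
  qed (use Ru u proj_carrier[OF P] in auto)
qed

lemma mprod_contr:
  assumes "\<And>R. R \<in> set Rs \<Longrightarrow> proj d R" "w \<in> carrier_vec d"
  shows "Re (ip d (mprod d Rs *\<^sub>v w) (mprod d Rs *\<^sub>v w)) \<le> Re (ip d w w)"
  using assms
proof (induction Rs)
  case Nil thus ?case by (simp add: mprod_Nil)
next
  case (Cons R Rs)
  have P: "proj d R" using Cons.prems by simp
  have cs: "\<And>M. M \<in> set Rs \<Longrightarrow> M \<in> carrier_mat d d" using Cons.prems proj_carrier by auto
  have car: "mprod d Rs \<in> carrier_mat d d" using cs by (rule mprod_carrier)
  define u where "u = mprod d Rs *\<^sub>v w"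
  have u: "u \<in> carrier_vec d" using car Cons.prems unfolding u_def by auto
  have e: "mprod d (R # Rs) *\<^sub>v w = R *\<^sub>v u"
    unfolding u_def using proj_carrier[OF P] cs Cons.prems(2) by (rule mprod_vec_Cons)
  have "Re (ip d (R *\<^sub>v u) (R *\<^sub>v u)) \<le> Re (ip d u u)" by (rule proj_step(1)[OF P u])
  also have "\<dots> \<le> Re (ip d w w)" using Cons unfolding u_def by simp
  finally show ?case using e by simp
qed

lemma mprod_fix:
  assumes "\<And>R. R \<in> set Rs \<Longrightarrow> proj d R" "w \<in> carrier_vec d"
    "Re (ip d w w) \<le> Re (ip d (mprod d Rs *\<^sub>v w) (mprod d Rs *\<^sub>v w))"
  shows "\<forall>R\<in>set Rs. R *\<^sub>v w = w"
  using assms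
proof (induction Rs)
  case Nil thus ?case by simp
next
  case (Cons R Rs)
  have P: "proj d R" using Cons.prems by simp
  have cs: "\<And>M. M \<in> set Rs \<Longrightarrow> M \<in> carrier_mat d d" using Cons.prems proj_carrier by auto
  have car: "mprod d Rs \<in> carrier_mat d d" using cs by (rule mprod_carrier)
  define u where "u = mprod d Rs *\<^sub>v w"
  have u: "u \<in> carrier_vec d" using car Cons.prems unfolding u_def by auto
  have e: "mprod d (R # Rs) *\<^sub>v w = R *\<^sub>v u"
    unfolding u_def using proj_carrier[OF P] cs Cons.prems(2) by (rule mprod_vec_Cons)
  have n1: "Re (ip d (R *\<^sub>v u) (R *\<^sub>v u)) \<le> Re (ip d u u)" by (rule proj_step(1)[OF P u])
  have n2: "Re (ip d u u) \<le> Re (ip d w w)"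
    unfolding u_def using mprod_contr[of Rs d w] Cons.prems by auto
  have "Re (ip d w w) \<le> Re (ip d u u)" using Cons.prems(3) n1 unfolding e by linarith
  hence IH: "\<forall>R\<in>set Rs. R *\<^sub>v w = w"
    unfolding u_def by (intro Cons.IH) (use Cons.prems in auto)
  have uw: "u = w" unfolding u_def using cs Cons.prems(2) IH by (rule mprod_fixes)
  have "R *\<^sub>v u = u" using proj_step(2)[OF P u] Cons.prems(3) n2 unfolding e by linarith
  thus ?case using IH uw by simp
qed

lemma vec_minus_zero:
  assumes "(a :: complex vec) \<in> carrier_vec d" "b \<in> carrier_vec d"
  shows "(a - b = 0\<^sub>v d) \<longleftrightarrow> a = b"
  using assms by (auto simp: vec_eq_iff)

lemma fix_iff:
  assumes "\<forall>R\<in>set Rs. proj d R" "v \<in> carrier_vec d"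
  shows "mprod d Rs *\<^sub>v v = v \<longleftrightarrow> (\<forall>R\<in>set Rs. R *\<^sub>v v = v)"
proof
  assume "mprod d Rs *\<^sub>v v = v"
  thus "\<forall>R\<in>set Rs. R *\<^sub>v v = v" using assms by (intro mprod_fix) auto
next
  assume "\<forall>R\<in>set Rs. R *\<^sub>v v = v"
  thus "mprod d Rs *\<^sub>v v = v" using assms proj_carrier by (intro mprod_fixes) auto
qed

lemma factor_zero:
  assumes "\<forall>R\<in>set Rs. proj d R"
  shows "det (mprod d Rs - 1\<^sub>m d) = 0 \<longleftrightarrow> (\<exists>v\<in>carrier_vec d. v \<noteq> 0\<^sub>v d \<and> (\<forall>R\<in>set Rs. R *\<^sub>v v = v))"
proof -
  have P: "mprod d Rs \<in> carrier_mat d d" using assms proj_carrier by (intro mprod_carrier) auto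
  have "det (mprod d Rs - 1\<^sub>m d) = 0 \<longleftrightarrow> (\<exists>v. v \<in> carrier_vec d \<and> v \<noteq> 0\<^sub>v d \<and> (mprod d Rs - 1\<^sub>m d) *\<^sub>v v = 0\<^sub>v d)"
    using P by (intro det_0_iff_vec_prod_zero) auto
  also have "\<dots> \<longleftrightarrow> (\<exists>v\<in>carrier_vec d. v \<noteq> 0\<^sub>v d \<and> (\<forall>R\<in>set Rs. R *\<^sub>v v = v))"
  proof -
    have "(mprod d Rs - 1\<^sub>m d) *\<^sub>v v = 0\<^sub>v d \<longleftrightarrow> (\<forall>R\<in>set Rs. R *\<^sub>v v = v)" if v: "v \<in> carrier_vec d" for v
    proof -
      have "(mprod d Rs - 1\<^sub>m d) *\<^sub>v v = mprod d Rs *\<^sub>v v - v"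
        using P v by (simp add: minus_mult_distrib_mat_vec)
      hence "(mprod d Rs - 1\<^sub>m d) *\<^sub>v v = 0\<^sub>v d \<longleftrightarrow> mprod d Rs *\<^sub>v v = v"
        using vec_minus_zero[of "mprod d Rs *\<^sub>v v" d v] P v by simp
      thus ?thesis using fix_iff[OF assms v] by simp
    qed
    thus ?thesis by blast
  qed
  finally show ?thesis .
qed

lemma detA:
  assumes "\<forall>Rs\<in>set Rss. \<forall>R\<in>set Rs. proj d R"
  shows "det (mprod d (map (\<lambda>Rs. mprod d Rs - 1\<^sub>m d) Rss)) = 0 \<longleftrightarrow>
    (\<exists>Rs\<in>set Rss. \<exists>v\<in>carrier_vec d. v \<noteq> 0\<^sub>v d \<and> (\<forall>R\<in>set Rs. R *\<^sub>v v = v))"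
proof -
  have car: "M \<in> carrier_mat d d" if "M \<in> set (map (\<lambda>Rs. mprod d Rs - 1\<^sub>m d) Rss)" for M
  proof -
    note MM = that
    obtain Rs where "Rs \<in> set Rss" "M = mprod d Rs - 1\<^sub>m d" using MM by auto
    moreover have "mprod d Rs \<in> carrier_mat d d"
      using assms calculation(1) proj_carrier by (intro mprod_carrier) auto
    ultimately show ?thesis by (simp add: minus_carrier_mat)
  qed
  have "det (mprod d (map (\<lambda>Rs. mprod d Rs - 1\<^sub>m d) Rss)) = prod_list (map det (map (\<lambda>Rs. mprod d Rs - 1\<^sub>m d) Rss))"
    using car by (rule mprod_det)
  also have "\<dots> = 0 \<longleftrightarrow> (\<exists>Rs\<in>set Rss. det (mprod d Rs - 1\<^sub>m d) = 0)"
    by (auto simp: prod_list_zero_iff)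
  finally show ?thesis using factor_zero assms by auto
qed

lemma ip_zero1: "ip d (0\<^sub>v d) v = 0"
  unfolding ip_def by simp

lemma range_fix:
  assumes P: "proj d R" and S: "S \<in> carrier_mat d d" and im: "mat_image R = mat_image S"
    and w: "w \<in> carrier_vec d"
  shows "R *\<^sub>v (S *\<^sub>v w) = S *\<^sub>v w"
proof -
  have "S *\<^sub>v w \<in> mat_image S" unfolding mat_image_def using S w by auto
  hence "S *\<^sub>v w \<in> mat_image R" using im by simp
  then obtain w' where w': "w' \<in> carrier_vec (dim_col R)" "S *\<^sub>v w = R *\<^sub>v w'"
    unfolding mat_image_def by blast
  have "w' \<in> carrier_vec d" using w' proj_carrier[OF P] by auto
  thus ?thesis using proj_idem_vec[OF P] w' by simp
qed

lemma dominated_fix: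
  assumes P: "proj d R" and S: "S \<in> carrier_mat d d" and im: "mat_image R = mat_image S"
    and rho: "\<rho> \<in> carrier_mat d d" "herm d \<rho>" "psdf d \<rho>"
    and c: "c > 0" and dom: "\<forall>u\<in>carrier_vec d. c * Re (ip d u (\<rho> *\<^sub>v u)) \<le> Re (ip d u (S *\<^sub>v u))"
    and e: "e \<in> carrier_vec d"
  shows "R *\<^sub>v (\<rho> *\<^sub>v e) = \<rho> *\<^sub>v e"
proof -
  have Rc: "R \<in> carrier_mat d d" "herm d R" using P unfolding proj_def by auto
  have ker: "\<rho> *\<^sub>v u = \<rho> *\<^sub>v (R *\<^sub>v u)" if u: "u \<in> carrier_vec d" for u
  proof -
    define y where "y = u - R *\<^sub>v u"
    have Ru: "R *\<^sub>v u \<in> carrier_vec d" using Rc u by auto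
    have y: "y \<in> carrier_vec d" unfolding y_def using u Ru by auto
    have Ry: "R *\<^sub>v y = 0\<^sub>v d"
    proof -
      have "R *\<^sub>v y = R *\<^sub>v u - R *\<^sub>v (R *\<^sub>v u)"
        unfolding y_def using Rc u Ru by (simp add: mult_minus_distrib_mat_vec)
      also have "\<dots> = 0\<^sub>v d" using proj_idem_vec[OF P u] Ru by simp
      finally show ?thesis .
    qed
    have Sy: "S *\<^sub>v y \<in> carrier_vec d" using S y by auto
    have "ip d y (S *\<^sub>v y) = ip d y (R *\<^sub>v (S *\<^sub>v y))" using range_fix[OF P S im y] by simp
    also have "\<dots> = ip d (R *\<^sub>v y) (S *\<^sub>v y)" using ip_herm[OF Rc y Sy] .
    also have "\<dots> = 0" unfolding Ry ip_zero1 ..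
    finally have "c * Re (ip d y (\<rho> *\<^sub>v y)) \<le> 0" using dom y by fastforce
    hence "Re (ip d y (\<rho> *\<^sub>v y)) \<le> 0" using c by (simp add: mult_le_0_iff)
    hence "\<rho> *\<^sub>v y = 0\<^sub>v d" using ker_lemma[OF rho y] by simp
    moreover have "\<rho> *\<^sub>v y = \<rho> *\<^sub>v u - \<rho> *\<^sub>v (R *\<^sub>v u)"
      unfolding y_def using rho u Ru by (simp add: mult_minus_distrib_mat_vec)
    ultimately show ?thesis using vec_minus_zero[of "\<rho> *\<^sub>v u" d "\<rho> *\<^sub>v (R *\<^sub>v u)"] rho u Ru by auto
  qed
  define f where "f = \<rho> *\<^sub>v e"
  have f: "f \<in> carrier_vec d" unfolding f_def using rho e by auto
  have Rf: "R *\<^sub>v f \<in> carrier_vec d" using Rc f by auto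
  define z where "z = R *\<^sub>v f - f"
  have z: "z \<in> carrier_vec d" unfolding z_def using f Rf by auto
  have Rz: "R *\<^sub>v z \<in> carrier_vec d" using Rc z by auto
  have "ip d z (R *\<^sub>v f) = ip d (R *\<^sub>v z) f" using ip_herm[OF Rc z f] .
  also have "\<dots> = ip d (\<rho> *\<^sub>v (R *\<^sub>v z)) e" unfolding f_def using ip_herm[OF rho(1,2) Rz e] .
  also have "\<dots> = ip d (\<rho> *\<^sub>v z) e" using ker[OF z] by simp
  also have "\<dots> = ip d z f" unfolding f_def using ip_herm[OF rho(1,2) z e] by simp
  finally have "ip d z z = 0" unfolding z_def using f Rf z[unfolded z_def] by (simp add: ip_minus2)
  hence "z = 0\<^sub>v d" using ip_self_zero[OF z] by simp
  thus ?thesis unfolding z_def f_def using vec_minus_zero[of "R *\<^sub>v f" d f] Rf f unfolding f_def by simp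
qed

lemma fix_dominated:
  assumes P: "proj d R" and S: "S \<in> carrier_mat d d" "herm d S" "psdf d S"
    and im: "mat_image R = mat_image S"
    and psi: "\<psi> \<in> carrier_vec d" "\<psi> \<noteq> 0\<^sub>v d" "R *\<^sub>v \<psi> = \<psi>"
  shows "\<exists>\<beta>>0. \<forall>u\<in>carrier_vec d. (cmod (ip d u \<psi>))^2 \<le> \<beta> * Re (ip d u (S *\<^sub>v u))"
proof -
  have "\<psi> \<in> mat_image R" unfolding mat_image_def using psi proj_carrier[OF P]
    by (auto intro!: exI[of _ \<psi>])
  hence "\<psi> \<in> mat_image S" using im by simp
  then obtain w where w: "w \<in> carrier_vec (dim_col S)" "\<psi> = S *\<^sub>v w"
    unfolding mat_image_def by blast
  have wd: "w \<in> carrier_vec d" using w S by auto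
  define \<beta> where "\<beta> = Re (ip d w (S *\<^sub>v w))"
  have "\<beta> > 0"
  proof (rule ccontr)
    assume "\<not> \<beta> > 0"
    hence "S *\<^sub>v w = 0\<^sub>v d" using ker_lemma[OF S wd] unfolding \<beta>_def by simp
    thus False using psi w by simp
  qed
  moreover have "(cmod (ip d u \<psi>))^2 \<le> \<beta> * Re (ip d u (S *\<^sub>v u))" if u: "u \<in> carrier_vec d" for u
    using cs[OF S u wd] unfolding \<beta>_def w(2) by (simp add: mult.commute)
  ultimately show ?thesis by blast
qed

definition qf :: "nat \<Rightarrow> complex mat \<Rightarrow> complex vec \<Rightarrow> complex" where
  "qf d M u = (\<Sum>i<d. \<Sum>j<d. cnj (u $ i) * M $$ (i, j) * u $ j)"

lemma ip_qf: "M \<in> carrier_mat d d \<Longrightarrow> u \<in> carrier_vec d \<Longrightarrow> ip d u (M *\<^sub>v u) = qf d M u"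
  unfolding ip_def qf_def
  by (auto simp: scalar_prod_def atLeast0LessThan sum_distrib_left mult.assoc intro!: sum.cong)

lemma qf_lin:
  assumes "\<And>i j. i < d \<Longrightarrow> j < d \<Longrightarrow> M $$ (i, j) = \<alpha> * A $$ (i, j) + \<beta> * B $$ (i, j)"
  shows "qf d M u = \<alpha> * qf d A u + \<beta> * qf d B u"
proof -
  have "qf d M u = (\<Sum>i<d. \<Sum>j<d. \<alpha> * (cnj (u $ i) * A $$ (i, j) * u $ j) + \<beta> * (cnj (u $ i) * B $$ (i, j) * u $ j))"
    unfolding qf_def using assms by (auto intro!: sum.cong simp: algebra_simps)
  also have "\<dots> = \<alpha> * qf d A u + \<beta> * qf d B u"
    unfolding qf_def by (simp add: sum.distrib sum_distrib_left)
  finally show ?thesis .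
qed

lemma msum_index: "i < d \<Longrightarrow> j < d \<Longrightarrow> msum d S f $$ (i, j) = (\<Sum>k\<in>S. f k $$ (i, j))"
  unfolding msum_def by simp

lemma msum_carrier: "msum d S f \<in> carrier_mat d d"
  unfolding msum_def by simp

lemma qf_msum: "qf d (msum d S f) u = (\<Sum>k\<in>S. qf d (f k) u)"
proof -
  have "qf d (msum d S f) u = (\<Sum>i<d. \<Sum>j<d. \<Sum>k\<in>S. cnj (u $ i) * f k $$ (i, j) * u $ j)"
    unfolding qf_def by (simp add: msum_index sum_distrib_left sum_distrib_right)
  also have "\<dots> = (\<Sum>i<d. \<Sum>k\<in>S. \<Sum>j<d. cnj (u $ i) * f k $$ (i, j) * u $ j)"
    by (intro sum.cong refl sum.swap)
  also have "\<dots> = (\<Sum>k\<in>S. \<Sum>i<d. \<Sum>j<d. cnj (u $ i) * f k $$ (i, j) * u $ j)"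
    by (rule sum.swap)
  finally show ?thesis unfolding qf_def .
qed

lemma tuples_finite: "finite (tuples n B)"
proof -
  define K where "K = (\<Sum>i<n. B i)"
  have "tuples n B \<subseteq> {xs. set xs \<subseteq> {..<K} \<and> length xs = n}"
  proof
    fix a assume a: "a \<in> tuples n B"
    have "set a \<subseteq> {..<K}"
    proof
      fix y assume "y \<in> set a"
      then obtain i where i: "i < length a" "a ! i = y" by (auto simp: in_set_conv_nth)
      hence "i < n" "y < B i" using a unfolding tuples_def by auto
      moreover have "B i \<le> K" unfolding K_def using \<open>i < n\<close>
        by (intro member_le_sum) auto
      ultimately show "y \<in> {..<K}" by simp
    qed
    thus "a \<in> {xs. set xs \<subseteq> {..<K} \<and> length xs = n}" using a unfolding tuples_def by auto
  qed
  thus ?thesis using finite_lists_length_eq[of "{..<K}" n] finite_subset by blast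
qed

lemma prod_le_member:
  fixes g :: "'b \<Rightarrow> real"
  assumes "finite S" "k \<in> S" "\<forall>s\<in>S. 0 \<le> g s \<and> g s \<le> 1"
  shows "prod g S \<le> g k"
proof -
  have "prod g S = g k * prod g (S - {k})" using assms by (simp add: prod.remove)
  also have "\<dots> \<le> g k * 1"
    using assms by (intro mult_left_mono prod_le_1) auto
  finally show ?thesis by simp
qed

lemma prod_ind:
  assumes "finite S"
  shows "(\<Prod>i\<in>S. (if Q i then 1 else 0 :: real)) = (if \<forall>i\<in>S. Q i then 1 else 0)"
  using assms by (induction S rule: finite_induct) auto

lemma psd_qf:
  "psd d M \<longleftrightarrow> M \<in> carrier_mat d d \<and> herm d M \<and> (\<forall>v\<in>carrier_vec d. 0 \<le> Re (qf d M v))"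
proof -
  have "(\<forall>v\<in>carrier_vec d. 0 \<le> Re (ip d v (M *\<^sub>v v))) \<longleftrightarrow> (\<forall>v\<in>carrier_vec d. 0 \<le> Re (qf d M v))"
    if "M \<in> carrier_mat d d" using ip_qf[OF that] by simp
  thus ?thesis unfolding psd_iff by blast
qed

lemma psd_psdf: "psd d M \<Longrightarrow> psdf d M"
  unfolding psd_iff psdf_def by auto

lemma psd_herm: "psd d M \<Longrightarrow> herm d M"
  unfolding psd_iff by auto

lemma psd_carrier: "psd d M \<Longrightarrow> M \<in> carrier_mat d d"
  unfolding psd_iff by auto

definition rank1 :: "nat \<Rightarrow> complex vec \<Rightarrow> complex mat" where
  "rank1 d \<psi> = mat d d (\<lambda>(i, j). \<psi> $ i * cnj (\<psi> $ j) * complex_of_real (1 / Re (ip d \<psi> \<psi>)))"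

lemma rank1_carrier: "rank1 d \<psi> \<in> carrier_mat d d"
  unfolding rank1_def by simp

lemma rank1_index: "i < d \<Longrightarrow> j < d \<Longrightarrow> rank1 d \<psi> $$ (i, j) = \<psi> $ i * cnj (\<psi> $ j) * complex_of_real (1 / Re (ip d \<psi> \<psi>))"
  unfolding rank1_def by simp

lemma rank1_qf: "qf d (rank1 d \<psi>) u = complex_of_real ((cmod (ip d u \<psi>))^2 / Re (ip d \<psi> \<psi>))"
proof -
  define c where "c = complex_of_real (1 / Re (ip d \<psi> \<psi>))"
  have "qf d (rank1 d \<psi>) u = (\<Sum>i<d. \<Sum>j<d. (cnj (u $ i) * \<psi> $ i) * (cnj (\<psi> $ j) * u $ j) * c)"
    unfolding qf_def c_def by (auto simp: rank1_index ac_simps intro!: sum.cong)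
  also have "\<dots> = ip d u \<psi> * ip d \<psi> u * c"
    unfolding ip_def by (subst sum_product, simp only: sum_distrib_right)
  also have "\<dots> = ip d u \<psi> * cnj (ip d u \<psi>) * c" using ip_conj by metis
  also have "\<dots> = complex_of_real ((cmod (ip d u \<psi>))^2 / Re (ip d \<psi> \<psi>))"
    unfolding c_def complex_norm_square[symmetric] by (simp add: divide_inverse)
  finally show ?thesis .
qed

lemma rank1_herm: "herm d (rank1 d \<psi>)"
  unfolding herm_def by (auto simp: rank1_index)

lemma rank1_density:
  assumes "\<psi> \<in> carrier_vec d" "\<psi> \<noteq> 0\<^sub>v d"
  shows "density d (rank1 d \<psi>)"
proof -
  have N: "Re (ip d \<psi> \<psi>) > 0"
  proof (rule ccontr)
    assume "\<not> Re (ip d \<psi> \<psi>) > 0"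
    hence "\<psi> = 0\<^sub>v d" using ip_self_zero assms(1) by simp
    thus False using assms by simp
  qed
  have "psd d (rank1 d \<psi>)"
    unfolding psd_qf using rank1_carrier rank1_herm rank1_qf N by simp
  moreover have "(\<Sum>i<d. rank1 d \<psi> $$ (i, i)) = 1"
  proof -
    define c where "c = complex_of_real (1 / Re (ip d \<psi> \<psi>))"
    have "(\<Sum>i<d. rank1 d \<psi> $$ (i, i)) = (\<Sum>i<d. cnj (\<psi> $ i) * \<psi> $ i * c)"
      by (intro sum.cong refl) (simp add: rank1_index c_def mult.commute)
    also have "\<dots> = ip d \<psi> \<psi> * c" unfolding ip_def by (simp add: sum_distrib_right)
    also have "\<dots> = complex_of_real (Re (ip d \<psi> \<psi>) * (1 / Re (ip d \<psi> \<psi>)))"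
      unfolding c_def by (subst ip_self_real) simp
    also have "\<dots> = 1" using N by simp
    finally show ?thesis .
  qed
  ultimately show ?thesis unfolding density_def by simp
qed

definition tvec :: "nat \<Rightarrow> nat list list \<Rightarrow> nat list \<Rightarrow> nat list" where
  "tvec n L x = map (\<lambda>i. L ! i ! (x ! i)) [0..<n]"

definition ind :: "nat \<Rightarrow> nat list list \<Rightarrow> nat list \<Rightarrow> nat list \<Rightarrow> real" where
  "ind n L a x = (if \<forall>i<n. a ! i = L ! i ! (x ! i) then 1 else 0)"

lemma ind_eq: "length a = n \<Longrightarrow> ind n L a x = (if a = tvec n L x then 1 else 0)"
  unfolding ind_def tvec_def by (auto simp: list_eq_iff_nth_eq)

lemma sum_ind:
  assumes "finite S" "\<forall>a\<in>S. length a = n"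
  shows "(\<Sum>a\<in>S. ind n L a x) = (if tvec n L x \<in> S then 1 else 0)"
proof -
  have "(\<Sum>a\<in>S. ind n L a x) = (\<Sum>a\<in>S. if a = tvec n L x then 1 else 0)"
    using assms(2) by (intro sum.cong refl) (simp add: ind_eq)
  also have "\<dots> = (if tvec n L x \<in> S then 1 else 0)"
    using assms(1) by (simp add: sum.delta')
  finally show ?thesis .
qed

lemma tvec_tuples:
  assumes "L \<in> local_boxes n A X" "x \<in> tuples n X"
  shows "tvec n L x \<in> tuples n A"
  using assms unfolding local_boxes_def tuples_def tvec_def by auto

lemma tvec_nth: "i < n \<Longrightarrow> tvec n L x ! i = L ! i ! (x ! i)"
  unfolding tvec_def by simp

lemma I_L_iff: "(a, x) \<in> I_L n A X L \<longleftrightarrow> a \<in> tuples n A \<and> x \<in> tuples n X \<and> ind n L a x = 1"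
  unfolding I_L_def ind_def by auto

lemma ind_01: "ind n L a x = 0 \<or> ind n L a x = 1"
  unfolding ind_def by auto

lemma I_L_finite: "finite (I_L n A X L)"
proof -
  have "I_L n A X L \<subseteq> tuples n A \<times> tuples n X" unfolding I_L_def by auto
  thus ?thesis using tuples_finite finite_subset by (metis finite_SigmaI)
qed

lemma msum_comb:
  assumes "i < d" "j < d"
  shows "msum d S (\<lambda>a. mat d d (\<lambda>(i, j). (F a $$ (i, j) - complex_of_real (e * g a) * P $$ (i, j)) * c)) $$ (i, j)
    = ((\<Sum>a\<in>S. F a $$ (i, j)) - complex_of_real (e * (\<Sum>a\<in>S. g a)) * P $$ (i, j)) * c"
proof -
  have "msum d S (\<lambda>a. mat d d (\<lambda>(i, j). (F a $$ (i, j) - complex_of_real (e * g a) * P $$ (i, j)) * c)) $$ (i, j)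
     = (\<Sum>a\<in>S. (F a $$ (i, j) - complex_of_real (e * g a) * P $$ (i, j)) * c)"
    using assms by (simp add: msum_index)
  also have "\<dots> = (\<Sum>a\<in>S. F a $$ (i, j) * c - complex_of_real (e * g a) * (P $$ (i, j) * c))"
    by (intro sum.cong refl) (simp add: algebra_simps)
  also have "\<dots> = (\<Sum>a\<in>S. F a $$ (i, j)) * c - (\<Sum>a\<in>S. complex_of_real (e * g a)) * (P $$ (i, j) * c)"
    by (simp only: sum_subtractf sum_distrib_right)
  also have "\<dots> = ((\<Sum>a\<in>S. F a $$ (i, j)) - (\<Sum>a\<in>S. complex_of_real (e * g a)) * P $$ (i, j)) * c"
    by (simp only: left_diff_distrib mult.assoc)
  also have "(\<Sum>a\<in>S. complex_of_real (e * g a)) = complex_of_real (e * (\<Sum>a\<in>S. g a))"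
    by (simp add: sum_distrib_left)
  finally show ?thesis .
qed

lemma msum_single:
  assumes "M \<in> carrier_mat d d"
  shows "msum d {..<1::nat} (\<lambda>j. M) = M"
proof -
  have e: "{..<1::nat} = {0}" by auto
  show ?thesis unfolding e by (rule eq_matI) (use assms in \<open>auto simp: msum_def\<close>)
qed

lemma comb_id:
  assumes "(y::complex) * c = 1"
  shows "complex_of_real e * (complex_of_real g * p) + y * ((s - complex_of_real (e * g) * p) * c) = s"
proof -
  have "y * ((s - complex_of_real (e * g) * p) * c) = (y * c) * (s - complex_of_real (e * g) * p)"
    by (simp only: ac_simps)
  also have "\<dots> = s - complex_of_real (e * g) * p" using assms by simp
  finally show ?thesis by (simp add: algebra_simps)
qed

lemma not_edge:
  assumes X1: "\<forall>i<n. X i \<ge> 1" and NS: "no_signaling n A X d \<sigma>"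
    and Rp: "\<forall>a\<in>tuples n A. \<forall>x\<in>tuples n X. proj d (R a x) \<and> mat_image (R a x) = mat_image (\<sigma> a x)"
    and L: "L \<in> local_boxes n A X"
    and psi: "\<psi> \<in> carrier_vec d" "\<psi> \<noteq> 0\<^sub>v d" "\<forall>(a, x)\<in>I_L n A X L. R a x *\<^sub>v \<psi> = \<psi>"
  shows "\<not> on_edge n A X d \<sigma>"
proof -
  let ?I = "I_L n A X L"
  have sig: "psd d (\<sigma> a x)" if "a \<in> tuples n A" "x \<in> tuples n X" for a x
    using NS that unfolding no_signaling_def by blast
  obtain \<rho> where rho: "density d \<rho>" "\<forall>x\<in>tuples n X. msum d (tuples n A) (\<lambda>a. \<sigma> a x) = \<rho>"
    using NS unfolding no_signaling_def by blast
  have marg: "\<And>I a x x'. I \<subseteq> {..<n} \<Longrightarrow> 1 \<le> card I \<Longrightarrow> card I < n \<Longrightarrow> a \<in> tuples n A \<Longrightarrow>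
     x \<in> tuples n X \<Longrightarrow> x' \<in> tuples n X \<Longrightarrow> agree_on I x x' \<Longrightarrow>
     msum d {a' \<in> tuples n A. agree_on I a' a} (\<lambda>a'. \<sigma> a' x) =
     msum d {a' \<in> tuples n A. agree_on I a' a} (\<lambda>a'. \<sigma> a' x')"
    using NS unfolding no_signaling_def by blast
  define N where "N = Re (ip d \<psi> \<psi>)"
  have N: "N > 0"
  proof (rule ccontr)
    assume "\<not> N > 0"
    hence "\<psi> = 0\<^sub>v d" using ip_self_zero psi(1) unfolding N_def by simp
    thus False using psi by simp
  qed
  have "\<forall>ax\<in>?I. \<exists>\<beta>. \<beta> > 0 \<and> (\<forall>u\<in>carrier_vec d. (cmod (ip d u \<psi>))^2 \<le> \<beta> * Re (qf d (\<sigma> (fst ax) (snd ax)) u))"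
  proof
    fix ax assume ax: "ax \<in> ?I"
    obtain a x where ax2: "ax = (a, x)" by force
    have t: "a \<in> tuples n A" "x \<in> tuples n X" using ax unfolding ax2 I_L_def by auto
    have S: "\<sigma> a x \<in> carrier_mat d d" "herm d (\<sigma> a x)" "psdf d (\<sigma> a x)"
      using sig[OF t] psd_carrier psd_herm psd_psdf by auto
    have fx: "R a x *\<^sub>v \<psi> = \<psi>" using psi(3) ax unfolding ax2 by auto
    obtain \<beta> where b: "\<beta> > 0" "\<forall>u\<in>carrier_vec d. (cmod (ip d u \<psi>))^2 \<le> \<beta> * Re (ip d u (\<sigma> a x *\<^sub>v u))"
      using fix_dominated[OF _ S _ psi(1,2) fx] Rp t by blast
    show "\<exists>\<beta>. \<beta> > 0 \<and> (\<forall>u\<in>carrier_vec d. (cmod (ip d u \<psi>))^2 \<le> \<beta> * Re (qf d (\<sigma> (fst ax) (snd ax)) u))"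
      using b ip_qf[OF S(1)] unfolding ax2 by auto
  qed
  then obtain bt where bt: "\<forall>ax\<in>?I. bt ax > 0 \<and> (\<forall>u\<in>carrier_vec d. (cmod (ip d u \<psi>))^2 \<le> bt ax * Re (qf d (\<sigma> (fst ax) (snd ax)) u))"
    by (metis (no_types, lifting) bchoice)
  define \<epsilon> where "\<epsilon> = Min (insert (1/2) ((\<lambda>ax. N / bt ax) ` ?I))"
  have finI: "finite ?I" by (rule I_L_finite)
  have eps: "0 < \<epsilon>" "\<epsilon> \<le> 1/2" "\<forall>ax\<in>?I. \<epsilon> \<le> N / bt ax"
  proof -
    show "0 < \<epsilon>" unfolding \<epsilon>_def using finI bt N by (auto simp: Min_gr_iff)
    show "\<epsilon> \<le> 1/2" unfolding \<epsilon>_def using finI by (intro Min_le) auto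
    show "\<forall>ax\<in>?I. \<epsilon> \<le> N / bt ax" unfolding \<epsilon>_def using finI by (auto intro!: Min_le)
  qed
  have domi: "\<epsilon> * (cmod (ip d u \<psi>))^2 / N \<le> Re (qf d (\<sigma> a x) u)"
    if ax: "(a, x) \<in> ?I" and u: "u \<in> carrier_vec d" for a x u
  proof -
    define k where "k = (cmod (ip d u \<psi>))^2"
    have k0: "k \<ge> 0" unfolding k_def by simp
    have b: "bt (a, x) > 0" "k \<le> bt (a, x) * Re (qf d (\<sigma> a x) u)"
      using bt ax u unfolding k_def by auto
    have "\<epsilon> * k \<le> (N / bt (a, x)) * k" using eps(3) ax k0 by (intro mult_right_mono) auto
    also have "\<dots> = N * (k / bt (a, x))" by simp
    also have "\<dots> \<le> N * Re (qf d (\<sigma> a x) u)"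
      using b N by (intro mult_left_mono) (auto simp: pos_divide_le_eq mult.commute)
    finally have "\<epsilon> * k \<le> N * Re (qf d (\<sigma> a x) u)" .
    thus ?thesis unfolding k_def[symmetric] using N by (simp add: pos_divide_le_eq mult.commute)
  qed
  define P where "P = rank1 d \<psi>"
  have Pd: "density d P" unfolding P_def using rank1_density psi by blast
  have Pc: "P \<in> carrier_mat d d" unfolding P_def by (rule rank1_carrier)
  have Ph: "\<And>i j. i < d \<Longrightarrow> j < d \<Longrightarrow> cnj (P $$ (j, i)) = P $$ (i, j)"
    using rank1_herm[of d \<psi>] unfolding P_def herm_def by (metis complex_cnj_cnj)
  have Pq: "qf d P u = complex_of_real ((cmod (ip d u \<psi>))^2 / N)" for u
    unfolding P_def N_def by (rule rank1_qf)
  have Ptr: "(\<Sum>i<d. P $$ (i, i)) = 1" using Pd unfolding density_def by simp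
  define c where "c = complex_of_real (1 / (1 - \<epsilon>))"
  define \<sigma>1 where "\<sigma>1 = (\<lambda>a x. complex_of_real (ind n L a x) \<cdot>\<^sub>m P)"
  define \<sigma>2 where "\<sigma>2 = (\<lambda>a x. mat d d (\<lambda>(i, j). (\<sigma> a x $$ (i, j) - complex_of_real (\<epsilon> * ind n L a x) * P $$ (i, j)) * c))"
  define \<rho>2 where "\<rho>2 = mat d d (\<lambda>(i, j). (\<rho> $$ (i, j) - complex_of_real \<epsilon> * P $$ (i, j)) * c)"
  have c1: "complex_of_real (1 - \<epsilon>) * c = 1"
    unfolding c_def using eps by (simp flip: of_real_mult)
  have LHS: "has_LHS n A X d \<sigma>1"
  proof -
    have p1: "\<forall>i<n. \<forall>x<X i. (\<Sum>a<A i. (if a = L ! i ! x then 1 else 0 :: real)) = 1"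
    proof (intro allI impI)
      fix i x assume "i < n" "x < X i"
      hence "L ! i ! x < A i" using L unfolding local_boxes_def by auto
      thus "(\<Sum>a<A i. (if a = L ! i ! x then 1 else 0 :: real)) = 1" by simp
    qed
    have p2: "\<sigma>1 a x = msum d {..<1::nat} (\<lambda>j. complex_of_real (1 * (\<Prod>i<n. (\<lambda>j i a x. if a = L ! i ! x then 1 else 0 :: real) j i (a ! i) (x ! i))) \<cdot>\<^sub>m P)"
      for a x
    proof -
      have "(\<Prod>i<n. (if a ! i = L ! i ! (x ! i) then 1 else 0 :: real)) = ind n L a x"
        unfolding ind_def by (subst prod_ind) auto
      moreover have "complex_of_real (ind n L a x) \<cdot>\<^sub>m P \<in> carrier_mat d d" using Pc by simp
      ultimately show ?thesis unfolding \<sigma>1_def using msum_single by simp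
    qed
    show ?thesis unfolding has_LHS_def
      apply (rule exI[of _ 1], rule exI[of _ "\<lambda>_. 1"])
      apply (rule exI[of _ "\<lambda>j i a x. if a = L ! i ! x then 1 else 0 :: real"], rule exI[of _ "\<lambda>_. P"])
      using Pd p1 p2 by auto
  qed
  have NS2: "no_signaling n A X d \<sigma>2"
  proof -
    have cc: "cnj c = c" unfolding c_def by simp
    have cpos: "1 / (1 - \<epsilon>) > 0" using eps by simp
    have psd2: "psd d (\<sigma>2 a x)" if t: "a \<in> tuples n A" "x \<in> tuples n X" for a x
    proof -
      have Sc: "\<sigma> a x \<in> carrier_mat d d" using sig[OF t] psd_carrier by auto
      have Sh: "\<And>i j. i < d \<Longrightarrow> j < d \<Longrightarrow> cnj (\<sigma> a x $$ (j, i)) = \<sigma> a x $$ (i, j)"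
        using psd_herm[OF sig[OF t]] unfolding herm_def by (metis complex_cnj_cnj)
      have h: "herm d (\<sigma>2 a x)" unfolding herm_def
      proof (intro allI impI)
        fix i j assume "i < d" "j < d"
        thus "\<sigma>2 a x $$ (i, j) = cnj (\<sigma>2 a x $$ (j, i))"
          by (simp add: \<sigma>2_def Sh Ph cc)
      qed
      have q: "0 \<le> Re (qf d (\<sigma>2 a x) u)" if u: "u \<in> carrier_vec d" for u
      proof -
        have "qf d (\<sigma>2 a x) u = c * qf d (\<sigma> a x) u + (- (c * complex_of_real (\<epsilon> * ind n L a x))) * qf d P u"
          by (rule qf_lin) (simp add: \<sigma>2_def algebra_simps)
        also have "\<dots> = complex_of_real (1 / (1 - \<epsilon>)) * (qf d (\<sigma> a x) u - complex_of_real (\<epsilon> * ind n L a x * ((cmod (ip d u \<psi>))^2 / N)))"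
          unfolding Pq c_def by (simp add: algebra_simps)
        finally have e: "Re (qf d (\<sigma>2 a x) u) = (1 / (1 - \<epsilon>)) * (Re (qf d (\<sigma> a x) u) - \<epsilon> * ind n L a x * ((cmod (ip d u \<psi>))^2 / N))"
          by simp
        have "\<epsilon> * ind n L a x * ((cmod (ip d u \<psi>))^2 / N) \<le> Re (qf d (\<sigma> a x) u)"
        proof (cases "ind n L a x = 1")
          case True
          hence "(a, x) \<in> ?I" using t I_L_iff by auto
          thus ?thesis using domi[OF _ u] True by simp
        next
          case False
          hence "ind n L a x = 0" using ind_01 by metis
          thus ?thesis using sig[OF t] u unfolding psd_qf by simp
        qed
        thus ?thesis unfolding e using cpos by simp
      qed
      show ?thesis unfolding psd_qf using h q by (simp add: \<sigma>2_def)
    qed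
    have sumind: "(\<Sum>a\<in>tuples n A. ind n L a x) = 1" if x: "x \<in> tuples n X" for x
    proof -
      have fin: "finite (tuples n A)" by (rule tuples_finite)
      have len: "\<forall>a\<in>tuples n A. length a = n" by (simp add: tuples_def)
      show ?thesis using sum_ind[OF fin len, of L x] tvec_tuples[OF L x] by simp
    qed
    have msum2: "msum d (tuples n A) (\<lambda>a. \<sigma>2 a x) = \<rho>2" if x: "x \<in> tuples n X" for x
    proof (rule eq_matI)
      fix i j assume "i < dim_row \<rho>2" "j < dim_col \<rho>2"
      hence ij: "i < d" "j < d" by (simp_all add: \<rho>2_def)
      have "msum d (tuples n A) (\<lambda>a. \<sigma>2 a x) $$ (i, j) =
         ((\<Sum>a\<in>tuples n A. \<sigma> a x $$ (i, j)) - complex_of_real (\<epsilon> * (\<Sum>a\<in>tuples n A. ind n L a x)) * P $$ (i, j)) * c"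
        unfolding \<sigma>2_def by (rule msum_comb[OF ij])
      also have "(\<Sum>a\<in>tuples n A. \<sigma> a x $$ (i, j)) = \<rho> $$ (i, j)"
      proof -
        have r: "msum d (tuples n A) (\<lambda>a. \<sigma> a x) = \<rho>" using rho(2) x by blast
        have "(\<Sum>a\<in>tuples n A. \<sigma> a x $$ (i, j)) = msum d (tuples n A) (\<lambda>a. \<sigma> a x) $$ (i, j)"
          by (rule msum_index[OF ij, symmetric])
        thus ?thesis unfolding r .
      qed
      also have "(\<Sum>a\<in>tuples n A. ind n L a x) = 1" by (rule sumind[OF x])
      finally show "msum d (tuples n A) (\<lambda>a. \<sigma>2 a x) $$ (i, j) = \<rho>2 $$ (i, j)"
        using ij by (simp add: \<rho>2_def)
    qed (simp_all add: msum_def \<rho>2_def)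
    define x0 where "x0 = replicate n (0::nat)"
    have x0: "x0 \<in> tuples n X" unfolding x0_def tuples_def using X1 by auto
    have rho2: "density d \<rho>2"
    proof -
      have Rc: "\<rho> \<in> carrier_mat d d" "herm d \<rho>" using rho(1) psd_carrier psd_herm unfolding density_def by auto
      have Rh: "\<And>i j. i < d \<Longrightarrow> j < d \<Longrightarrow> cnj (\<rho> $$ (j, i)) = \<rho> $$ (i, j)"
        using Rc(2) unfolding herm_def by (metis complex_cnj_cnj)
      have h: "herm d \<rho>2" unfolding herm_def
      proof (intro allI impI)
        fix i j assume "i < d" "j < d"
        thus "\<rho>2 $$ (i, j) = cnj (\<rho>2 $$ (j, i))"
          by (simp add: \<rho>2_def Rh Ph cc)
      qed
      have q: "0 \<le> Re (qf d \<rho>2 u)" if u: "u \<in> carrier_vec d" for u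
      proof -
        have "qf d \<rho>2 u = (\<Sum>a\<in>tuples n A. qf d (\<sigma>2 a x0) u)"
          using msum2[OF x0] qf_msum by metis
        hence "Re (qf d \<rho>2 u) = (\<Sum>a\<in>tuples n A. Re (qf d (\<sigma>2 a x0) u))" by (simp add: Re_sum)
        also have "\<dots> \<ge> 0"
          using psd2 x0 u unfolding psd_qf by (intro sum_nonneg) auto
        finally show ?thesis .
      qed
      have tr: "(\<Sum>i<d. \<rho>2 $$ (i, i)) = 1"
      proof -
        have "(\<Sum>i<d. \<rho>2 $$ (i, i)) = (\<Sum>i<d. \<rho> $$ (i, i) * c - complex_of_real \<epsilon> * (P $$ (i, i) * c))"
          by (intro sum.cong refl) (simp add: \<rho>2_def algebra_simps)
        also have "\<dots> = (\<Sum>i<d. \<rho> $$ (i, i)) * c - complex_of_real \<epsilon> * ((\<Sum>i<d. P $$ (i, i)) * c)"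
          by (simp add: sum_subtractf sum_distrib_left sum_distrib_right)
        also have "\<dots> = complex_of_real (1 - \<epsilon>) * c"
          using rho(1) Ptr unfolding density_def by (simp add: algebra_simps)
        also have "\<dots> = 1" by (rule c1)
        finally show ?thesis .
      qed
      show ?thesis unfolding density_def psd_qf using h q tr by (simp add: \<rho>2_def)
    qed
    have marg2: "msum d {a' \<in> tuples n A. agree_on I a' a} (\<lambda>a'. \<sigma>2 a' x) =
           msum d {a' \<in> tuples n A. agree_on I a' a} (\<lambda>a'. \<sigma>2 a' x')"
      if I: "I \<subseteq> {..<n}" "1 \<le> card I" "card I < n" and a: "a \<in> tuples n A"
        and x: "x \<in> tuples n X" "x' \<in> tuples n X" "agree_on I x x'" for I a x x'
    proof -
      let ?S = "{a' \<in> tuples n A. agree_on I a' a}"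
      have finS: "finite ?S" using tuples_finite by simp
      have lenS: "\<forall>a\<in>?S. length a = n" unfolding tuples_def by auto
      have tin: "tvec n L y \<in> ?S \<longleftrightarrow> (\<forall>i\<in>I. L ! i ! (y ! i) = a ! i)" if y: "y \<in> tuples n X" for y
      proof -
        have "\<forall>i\<in>I. tvec n L y ! i = L ! i ! (y ! i)" using I(1) tvec_nth by auto
        thus ?thesis using tvec_tuples[OF L y] by (auto simp: agree_on_def)
      qed
      have "(\<forall>i\<in>I. L ! i ! (x ! i) = a ! i) \<longleftrightarrow> (\<forall>i\<in>I. L ! i ! (x' ! i) = a ! i)"
        using x(3) unfolding agree_on_def by auto
      hence si: "(\<Sum>a\<in>?S. ind n L a x) = (\<Sum>a\<in>?S. ind n L a x')"
        using sum_ind[OF finS lenS] tin x by simp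
      have ms: "msum d ?S (\<lambda>a'. \<sigma> a' x) = msum d ?S (\<lambda>a'. \<sigma> a' x')" by (rule marg[OF I a x])
      show ?thesis
      proof (rule eq_matI)
        fix i j assume "i < dim_row (msum d ?S (\<lambda>a'. \<sigma>2 a' x'))" "j < dim_col (msum d ?S (\<lambda>a'. \<sigma>2 a' x'))"
        hence ij: "i < d" "j < d" by (simp_all add: msum_def)
        have e1: "(\<Sum>a\<in>?S. \<sigma> a x $$ (i, j)) = (\<Sum>a\<in>?S. \<sigma> a x' $$ (i, j))"
        proof -
          have "(\<Sum>a\<in>?S. \<sigma> a x $$ (i, j)) = msum d ?S (\<lambda>a'. \<sigma> a' x) $$ (i, j)"
            by (rule msum_index[OF ij, symmetric])
          also have "\<dots> = msum d ?S (\<lambda>a'. \<sigma> a' x') $$ (i, j)" unfolding ms ..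
          also have "\<dots> = (\<Sum>a\<in>?S. \<sigma> a x' $$ (i, j))" by (rule msum_index[OF ij])
          finally show ?thesis .
        qed
        show "msum d ?S (\<lambda>a'. \<sigma>2 a' x) $$ (i, j) = msum d ?S (\<lambda>a'. \<sigma>2 a' x') $$ (i, j)"
          unfolding \<sigma>2_def msum_comb[OF ij] e1 si ..
      qed (simp_all add: msum_def)
    qed
    show ?thesis unfolding no_signaling_def
      using psd2 msum2 rho2 marg2 by blast
  qed
  have dec: "\<forall>a\<in>tuples n A. \<forall>x\<in>tuples n X. \<sigma> a x = complex_of_real \<epsilon> \<cdot>\<^sub>m \<sigma>1 a x + complex_of_real (1 - \<epsilon>) \<cdot>\<^sub>m \<sigma>2 a x"
  proof (intro ballI)
    fix a x assume t: "a \<in> tuples n A" "x \<in> tuples n X"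
    have Sc: "\<sigma> a x \<in> carrier_mat d d" using sig[OF t] psd_carrier by auto
    show "\<sigma> a x = complex_of_real \<epsilon> \<cdot>\<^sub>m \<sigma>1 a x + complex_of_real (1 - \<epsilon>) \<cdot>\<^sub>m \<sigma>2 a x"
    proof (rule eq_matI)
      fix i j assume ij: "i < dim_row (complex_of_real \<epsilon> \<cdot>\<^sub>m \<sigma>1 a x + complex_of_real (1 - \<epsilon>) \<cdot>\<^sub>m \<sigma>2 a x)"
        "j < dim_col (complex_of_real \<epsilon> \<cdot>\<^sub>m \<sigma>1 a x + complex_of_real (1 - \<epsilon>) \<cdot>\<^sub>m \<sigma>2 a x)"
      hence ij2: "i < d" "j < d" by (simp_all add: \<sigma>2_def)
      have "(complex_of_real \<epsilon> \<cdot>\<^sub>m \<sigma>1 a x + complex_of_real (1 - \<epsilon>) \<cdot>\<^sub>m \<sigma>2 a x) $$ (i, j)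
        = complex_of_real \<epsilon> * (complex_of_real (ind n L a x) * P $$ (i, j)) +
          complex_of_real (1 - \<epsilon>) * ((\<sigma> a x $$ (i, j) - complex_of_real (\<epsilon> * ind n L a x) * P $$ (i, j)) * c)"
        using ij2 Pc by (simp add: \<sigma>1_def \<sigma>2_def)
      also have "\<dots> = \<sigma> a x $$ (i, j)" by (rule comb_id[OF c1])
      finally show "\<sigma> a x $$ (i, j) = (complex_of_real \<epsilon> \<cdot>\<^sub>m \<sigma>1 a x + complex_of_real (1 - \<epsilon>) \<cdot>\<^sub>m \<sigma>2 a x) $$ (i, j)" by simp
    qed (use Sc Pc in \<open>auto simp: \<sigma>1_def \<sigma>2_def\<close>)
  qed
  show ?thesis
  proof
    assume oe: "on_edge n A X d \<sigma>"
    have "0 \<le> \<epsilon> \<and> \<epsilon> \<le> 1 \<and> has_LHS n A X d \<sigma>1 \<and> no_signaling n A X d \<sigma>2 \<and>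
      (\<forall>a\<in>tuples n A. \<forall>x\<in>tuples n X. \<sigma> a x = complex_of_real \<epsilon> \<cdot>\<^sub>m \<sigma>1 a x + complex_of_real (1 - \<epsilon>) \<cdot>\<^sub>m \<sigma>2 a x)"
      using LHS NS2 dec eps by simp
    hence "\<epsilon> = 0" using oe unfolding on_edge_def by blast
    thus False using eps by simp
  qed
qed

lemma fixed_of_not_edge:
  assumes NS: "no_signaling n A X d \<sigma>"
    and Rp: "\<forall>a\<in>tuples n A. \<forall>x\<in>tuples n X. proj d (R a x) \<and> mat_image (R a x) = mat_image (\<sigma> a x)"
    and ne: "\<not> on_edge n A X d \<sigma>"
  shows "\<exists>L\<in>local_boxes n A X. \<exists>\<psi>\<in>carrier_vec d. \<psi> \<noteq> 0\<^sub>v d \<and> (\<forall>(a, x)\<in>I_L n A X L. R a x *\<^sub>v \<psi> = \<psi>)"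
proof -
  have sig: "psd d (\<sigma> a x)" if "a \<in> tuples n A" "x \<in> tuples n X" for a x
    using NS that unfolding no_signaling_def by blast
  obtain \<epsilon> \<sigma>1 \<sigma>2 where e: "0 \<le> \<epsilon>" "\<epsilon> \<le> 1" "has_LHS n A X d \<sigma>1" "no_signaling n A X d \<sigma>2"
    "\<forall>a\<in>tuples n A. \<forall>x\<in>tuples n X. \<sigma> a x = complex_of_real \<epsilon> \<cdot>\<^sub>m \<sigma>1 a x + complex_of_real (1 - \<epsilon>) \<cdot>\<^sub>m \<sigma>2 a x"
    "\<epsilon> \<noteq> 0"
    using ne unfolding on_edge_def by blast
  have sig2: "psd d (\<sigma>2 a x)" if "a \<in> tuples n A" "x \<in> tuples n X" for a x
    using e(4) that unfolding no_signaling_def by blast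
  obtain m and q :: "nat \<Rightarrow> real" and p :: "nat \<Rightarrow> nat \<Rightarrow> nat \<Rightarrow> nat \<Rightarrow> real" and \<rho> where lhs:
    "\<forall>j<m. 0 \<le> q j" "(\<Sum>j<m. q j) = 1" "\<forall>j<m. density d (\<rho> j)"
    "\<forall>j<m. \<forall>i<n. \<forall>x<X i. (\<forall>a<A i. 0 \<le> p j i a x) \<and> (\<Sum>a<A i. p j i a x) = 1"
    "\<forall>a\<in>tuples n A. \<forall>x\<in>tuples n X. \<sigma>1 a x = msum d {..<m}
             (\<lambda>j. complex_of_real (q j * (\<Prod>i<n. p j i (a ! i) (x ! i))) \<cdot>\<^sub>m \<rho> j)"
    using e(3) unfolding has_LHS_def by blast
  obtain j where j: "j < m" "q j > 0"
  proof -
    have "\<exists>j<m. q j > 0"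
    proof (rule ccontr)
      assume "\<not> (\<exists>j<m. q j > 0)"
      hence "\<forall>j\<in>{..<m}. q j = 0" using lhs(1) by force
      hence "(\<Sum>j<m. q j) = 0" by simp
      thus False using lhs(2) by simp
    qed
    thus ?thesis using that by blast
  qed
  have pex: "\<exists>a. a < A i \<and> p j i a x > 0" if ix: "i < n" "x < X i" for i x
  proof (rule ccontr)
    assume "\<not> (\<exists>a. a < A i \<and> p j i a x > 0)"
    hence "\<forall>a\<in>{..<A i}. p j i a x = 0" using lhs(4) j ix by force
    hence "(\<Sum>a<A i. p j i a x) = 0" by simp
    thus False using lhs(4) j ix by simp
  qed
  define f where "f = (\<lambda>i x. SOME a. a < A i \<and> p j i a x > 0)"
  have f: "f i x < A i \<and> p j i (f i x) x > 0" if "i < n" "x < X i" for i x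
    unfolding f_def using someI_ex[OF pex[OF that]] .
  define L where "L = map (\<lambda>i. map (\<lambda>x. f i x) [0..<X i]) [0..<n]"
  have Lnth: "L ! i ! x = f i x" if "i < n" "x < X i" for i x
    unfolding L_def using that by simp
  have L: "L \<in> local_boxes n A X"
    unfolding local_boxes_def using f by (auto simp: L_def)
  have pnn: "0 \<le> p j i a x" if "i < n" "x < X i" "a < A i" for i a x
    using lhs(4) j that by blast
  have ple1: "p j i a x \<le> 1" if ix: "i < n" "x < X i" "a < A i" for i a x
  proof -
    have "p j i a x \<le> (\<Sum>a'<A i. p j i a' x)"
      using ix pnn[OF ix(1,2)] by (intro member_le_sum) auto
    thus ?thesis using lhs(4) j ix by simp
  qed
  define w where "w = (\<Prod>i<n. \<Prod>x<X i. p j i (f i x) x)"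
  have w: "w > 0" unfolding w_def using f by (intro prod_pos) auto
  have prodge: "w \<le> (\<Prod>i<n. p j i (a ! i) (x ! i))" if ax: "(a, x) \<in> I_L n A X L" for a x
    unfolding w_def
  proof (rule prod_mono)
    fix i assume "i \<in> {..<n}"
    hence i: "i < n" by simp
    have t: "a ! i < A i" "x ! i < X i" using ax i unfolding I_L_def tuples_def by auto
    have ai: "a ! i = f i (x ! i)" using ax i Lnth[OF i t(2)] unfolding I_L_def by auto
    have "(\<Prod>x'<X i. p j i (f i x') x') \<le> p j i (f i (x ! i)) (x ! i)"
      using t f[OF i] pnn[OF i] ple1[OF i] by (intro prod_le_member[where g = "\<lambda>x'. p j i (f i x') x'"]) auto
    moreover have "0 \<le> (\<Prod>x'<X i. p j i (f i x') x')" using f[OF i] pnn[OF i] by (intro prod_nonneg) auto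
    ultimately show "0 \<le> (\<Prod>x'<X i. p j i (f i x') x') \<and> (\<Prod>x'<X i. p j i (f i x') x') \<le> p j i (a ! i) (x ! i)"
      using ai by simp
  qed
  have rj: "density d (\<rho> j)" using lhs(3) j by blast
  have rjc: "\<rho> j \<in> carrier_mat d d" "herm d (\<rho> j)" "psdf d (\<rho> j)"
    using rj unfolding density_def using psd_carrier psd_herm psd_psdf by auto
  obtain k where k: "k < d" "\<rho> j $$ (k, k) \<noteq> 0"
  proof -
    have "\<exists>k<d. \<rho> j $$ (k, k) \<noteq> 0"
    proof (rule ccontr)
      assume "\<not> (\<exists>k<d. \<rho> j $$ (k, k) \<noteq> 0)"
      hence "(\<Sum>k<d. \<rho> j $$ (k, k)) = 0" by simp
      thus False using rj unfolding density_def by simp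
    qed
    thus ?thesis using that by blast
  qed
  define \<psi> where "\<psi> = \<rho> j *\<^sub>v unit_vec d k"
  have psic: "\<psi> \<in> carrier_vec d" unfolding \<psi>_def using rjc by auto
  have "\<psi> $ k = \<rho> j $$ (k, k)" unfolding \<psi>_def using rjc k by simp
  hence psin: "\<psi> \<noteq> 0\<^sub>v d" using k by auto
  have fixs: "R a x *\<^sub>v \<psi> = \<psi>" if ax: "(a, x) \<in> I_L n A X L" for a x
  proof -
    have t: "a \<in> tuples n A" "x \<in> tuples n X" using ax unfolding I_L_def by auto
    have S: "\<sigma> a x \<in> carrier_mat d d" using sig[OF t] psd_carrier by auto
    have S2: "\<sigma>2 a x \<in> carrier_mat d d" using sig2[OF t] psd_carrier by auto
    define c where "c = \<epsilon> * q j * w"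
    have c: "c > 0" unfolding c_def using e(1,6) j w by simp
    have dom: "\<forall>u\<in>carrier_vec d. c * Re (ip d u (\<rho> j *\<^sub>v u)) \<le> Re (ip d u (\<sigma> a x *\<^sub>v u))"
    proof
      fix u :: "complex vec" assume u: "u \<in> carrier_vec d"
      define Pk where "Pk = (\<lambda>k. \<Prod>i<n. p k i (a ! i) (x ! i))"
      have Pknn: "0 \<le> Pk k'" if "k' < m" for k'
        unfolding Pk_def using lhs(4) that t unfolding tuples_def by (intro prod_nonneg) auto
      have rq: "0 \<le> Re (qf d (\<rho> k') u)" if "k' < m" for k'
        using lhs(3) that u unfolding density_def psd_qf by auto
      have s1: "\<sigma>1 a x = msum d {..<m} (\<lambda>k'. complex_of_real (q k' * Pk k') \<cdot>\<^sub>m \<rho> k')"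
        using lhs(5) t unfolding Pk_def by blast
      have q1: "qf d (\<sigma>1 a x) u = (\<Sum>k'<m. complex_of_real (q k' * Pk k') * qf d (\<rho> k') u)"
      proof -
        have "qf d (\<sigma>1 a x) u = (\<Sum>k'<m. qf d (complex_of_real (q k' * Pk k') \<cdot>\<^sub>m \<rho> k') u)"
          unfolding s1 by (rule qf_msum)
        also have "\<dots> = (\<Sum>k'<m. complex_of_real (q k' * Pk k') * qf d (\<rho> k') u)"
        proof (rule sum.cong[OF refl])
          fix k' assume "k' \<in> {..<m}"
          hence "\<rho> k' \<in> carrier_mat d d" using lhs(3) psd_carrier unfolding density_def by auto
          thus "qf d (complex_of_real (q k' * Pk k') \<cdot>\<^sub>m \<rho> k') u = complex_of_real (q k' * Pk k') * qf d (\<rho> k') u"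
            using qf_lin[of d "complex_of_real (q k' * Pk k') \<cdot>\<^sub>m \<rho> k'" "complex_of_real (q k' * Pk k')" "\<rho> k'" 0 "\<rho> k'" u]
            by simp
        qed
        finally show ?thesis .
      qed
      have "Re (qf d (\<sigma>1 a x) u) = (\<Sum>k'<m. q k' * Pk k' * Re (qf d (\<rho> k') u))"
        unfolding q1 by (simp add: Re_sum)
      also have "\<dots> \<ge> q j * Pk j * Re (qf d (\<rho> j) u)"
        using j lhs(1) Pknn rq by (intro member_le_sum) auto
      finally have r1: "q j * Pk j * Re (qf d (\<rho> j) u) \<le> Re (qf d (\<sigma>1 a x) u)" .
      have "w * Re (qf d (\<rho> j) u) \<le> Pk j * Re (qf d (\<rho> j) u)"
        using prodge[OF ax] rq[OF j(1)] unfolding Pk_def by (intro mult_right_mono) auto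
      hence r2: "q j * w * Re (qf d (\<rho> j) u) \<le> Re (qf d (\<sigma>1 a x) u)"
      proof -
        have "q j * (w * Re (qf d (\<rho> j) u)) \<le> q j * (Pk j * Re (qf d (\<rho> j) u))"
          using j(2) \<open>w * Re (qf d (\<rho> j) u) \<le> Pk j * Re (qf d (\<rho> j) u)\<close> by (intro mult_left_mono) auto
        thus ?thesis using r1 by (simp add: mult.assoc)
      qed
      have qs: "qf d (\<sigma> a x) u = complex_of_real \<epsilon> * qf d (\<sigma>1 a x) u + complex_of_real (1 - \<epsilon>) * qf d (\<sigma>2 a x) u"
      proof (rule qf_lin)
        fix i' j' assume "i' < d" "j' < d"
        moreover have "\<sigma>1 a x \<in> carrier_mat d d" unfolding s1 by (rule msum_carrier)
        ultimately show "\<sigma> a x $$ (i', j') = complex_of_real \<epsilon> * \<sigma>1 a x $$ (i', j') + complex_of_real (1 - \<epsilon>) * \<sigma>2 a x $$ (i', j')"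
          using e(5) t S2 by auto
      qed
      have "Re (qf d (\<sigma> a x) u) = \<epsilon> * Re (qf d (\<sigma>1 a x) u) + (1 - \<epsilon>) * Re (qf d (\<sigma>2 a x) u)"
        unfolding qs by simp
      moreover have "0 \<le> (1 - \<epsilon>) * Re (qf d (\<sigma>2 a x) u)"
        using e(2) sig2[OF t] u unfolding psd_qf by simp
      moreover have "\<epsilon> * (q j * w * Re (qf d (\<rho> j) u)) \<le> \<epsilon> * Re (qf d (\<sigma>1 a x) u)"
        using r2 e(1) by (rule mult_left_mono)
      ultimately have "c * Re (qf d (\<rho> j) u) \<le> Re (qf d (\<sigma> a x) u)"
        unfolding c_def by (simp add: mult.assoc)
      thus "c * Re (ip d u (\<rho> j *\<^sub>v u)) \<le> Re (ip d u (\<sigma> a x *\<^sub>v u))"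
        using ip_qf[OF rjc(1) u] ip_qf[OF S u] by simp
    qed
    have "R a x *\<^sub>v (\<rho> j *\<^sub>v unit_vec d k) = \<rho> j *\<^sub>v unit_vec d k"
      using Rp t by (intro dominated_fix[OF _ S _ rjc c dom]) (auto simp: k)
    thus ?thesis unfolding \<psi>_def .
  qed
  show ?thesis using L psic psin fixs by blast
qed

theorem theorem1:
  fixes n d :: nat and A X :: "nat \<Rightarrow> nat"
    and \<sigma> R :: "nat list \<Rightarrow> nat list \<Rightarrow> complex mat"
    and Ls :: "nat list list list"
    and ord :: "nat list list \<Rightarrow> (nat list \<times> nat list) list"
  assumes "n \<ge> 1" "d \<ge> 1" "\<forall>i<n. A i \<ge> 1" "\<forall>i<n. X i \<ge> 1"
    and "no_signaling n A X d \<sigma>"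
    and "\<forall>a\<in>tuples n A. \<forall>x\<in>tuples n X. is_orth_proj_onto d (R a x) (mat_image (\<sigma> a x))"
    and "distinct Ls" "set Ls = local_boxes n A X"
    and "\<forall>L\<in>local_boxes n A X. distinct (ord L) \<and> set (ord L) = I_L n A X L"
  shows "on_edge n A X d \<sigma> \<longleftrightarrow>
    det (mprod d (map (\<lambda>L. mprod d (map (\<lambda>(a, x). R a x) (ord L)) - 1\<^sub>m d) Ls)) \<noteq> 0"
proof -
  have Rp: "\<forall>a\<in>tuples n A. \<forall>x\<in>tuples n X. proj d (R a x) \<and> mat_image (R a x) = mat_image (\<sigma> a x)"
    using assms(6) unfolding is_orth_proj_onto_def proj_def using adjoint_herm by metis
  define Rss where "Rss = map (\<lambda>L. map (\<lambda>(a, x). R a x) (ord L)) Ls"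
  have eq: "map (\<lambda>L. mprod d (map (\<lambda>(a, x). R a x) (ord L)) - 1\<^sub>m d) Ls = map (\<lambda>Rs. mprod d Rs - 1\<^sub>m d) Rss"
    unfolding Rss_def by simp
  have setord: "set (ord L) = I_L n A X L" if "L \<in> set Ls" for L
    using assms(8,9) that by blast
  have projs: "\<forall>Rs\<in>set Rss. \<forall>R'\<in>set Rs. proj d R'"
  proof (intro ballI)
    fix Rs R' assume "Rs \<in> set Rss" "R' \<in> set Rs"
    then obtain L a x where "L \<in> set Ls" "(a, x) \<in> set (ord L)" "R' = R a x"
      unfolding Rss_def by auto
    hence "a \<in> tuples n A" "x \<in> tuples n X" "R' = R a x" using setord unfolding I_L_def by auto
    thus "proj d R'" using Rp by blast
  qed
  have "det (mprod d (map (\<lambda>L. mprod d (map (\<lambda>(a, x). R a x) (ord L)) - 1\<^sub>m d) Ls)) = 0 \<longleftrightarrow>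
    (\<exists>Rs\<in>set Rss. \<exists>v\<in>carrier_vec d. v \<noteq> 0\<^sub>v d \<and> (\<forall>R'\<in>set Rs. R' *\<^sub>v v = v))"
    unfolding eq using detA[OF projs] .
  also have "\<dots> \<longleftrightarrow> (\<exists>L\<in>local_boxes n A X. \<exists>v\<in>carrier_vec d. v \<noteq> 0\<^sub>v d \<and> (\<forall>(a, x)\<in>I_L n A X L. R a x *\<^sub>v v = v))"
  proof -
    have "(\<forall>R'\<in>set (map (\<lambda>(a, x). R a x) (ord L)). R' *\<^sub>v v = v) \<longleftrightarrow> (\<forall>(a, x)\<in>I_L n A X L. R a x *\<^sub>v v = v)"
      if "L \<in> set Ls" for L v
      using setord[OF that] by auto
    thus ?thesis unfolding Rss_def using assms(8) by auto
  qed
  finally have det0: "det (mprod d (map (\<lambda>L. mprod d (map (\<lambda>(a, x). R a x) (ord L)) - 1\<^sub>m d) Ls)) = 0 \<longleftrightarrow>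
    (\<exists>L\<in>local_boxes n A X. \<exists>v\<in>carrier_vec d. v \<noteq> 0\<^sub>v d \<and> (\<forall>(a, x)\<in>I_L n A X L. R a x *\<^sub>v v = v))" .
  show ?thesis
  proof
    assume oe: "on_edge n A X d \<sigma>"
    show "det (mprod d (map (\<lambda>L. mprod d (map (\<lambda>(a, x). R a x) (ord L)) - 1\<^sub>m d) Ls)) \<noteq> 0"
    proof
      assume "det (mprod d (map (\<lambda>L. mprod d (map (\<lambda>(a, x). R a x) (ord L)) - 1\<^sub>m d) Ls)) = 0"
      then obtain L v where "L \<in> local_boxes n A X" "v \<in> carrier_vec d" "v \<noteq> 0\<^sub>v d"
        "\<forall>(a, x)\<in>I_L n A X L. R a x *\<^sub>v v = v" using det0 by blast
      hence "\<not> on_edge n A X d \<sigma>" using not_edge[OF assms(4,5) Rp] by blast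
      thus False using oe by simp
    qed
  next
    assume "det (mprod d (map (\<lambda>L. mprod d (map (\<lambda>(a, x). R a x) (ord L)) - 1\<^sub>m d) Ls)) \<noteq> 0"
    thus "on_edge n A X d \<sigma>" using det0 fixed_of_not_edge[OF assms(5) Rp] by blast
  qed
qed

end
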